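(* Let $f=\frac1n\sum_{i=1}^n f_i$ where each $f_i:\mathbb{R}^d\to\mathbb{R}$ is $L$-smooth, and assume moreover that either each $f_i$ is $\mu$-strongly convex for some $\mu>0$, or $\inf_x f(x)>-\infty$. Then the iterates of No Full Grad SVRG (described in the context) satisfy, for every epoch $s$, $$\Big\|\nabla f(\omega_s)-\frac1n\sum_{t=0}^{n-1}v_s^t\Big\|^2\le 2\|\nabla f(\omega_s)-v_s\|^2+\frac{2L^2}{n}\sum_{t=0}^{n-1}\|x_s^t-\omega_s\|^2.$$
   Context: No Full Grad SVRG: input $x_0^0\in\mathbb{R}^d$, $\omega_0=x_0^0$, $\tilde v_0^0=0$, $v_0=0$, stepsize $\gamma>0$. For epochs $s=0,1,\dots$: choose a permutation $\pi_s^0,\dots,\pi_s^{n-1}$ of the $n$ component indices (by any shuffling rule); for $t=0,\dots,n-1$ set $\tilde v_s^{t+1}=\frac{t}{t+1}\tilde v_s^t+\frac1{t+1}\nabla f_{\pi_s^t}(x_s^t)$, $v_s^t=\nabla f_{\pi_s^t}(x_s^t)-\nabla f_{\pi_s^t}(\omega_s)+v_s$, $x_s^{t+1}=x_s^t-\gamma v_s^t$; then $x_{s+1}^0=x_s^n$, $\omega_{s+1}=x_s^n$, $\tilde v_{s+1}^0=0$, $v_{s+1}=\tilde v_s^n$. *)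

theory Defs
  imports "HOL-Analysis.Analysis"
begin

text \<open>Components are indexed by 0..n-1. g i x is the gradient of f i at x.\<close>

definition has_grad :: "('a::real_inner \<Rightarrow> real) \<Rightarrow> ('a \<Rightarrow> 'a) \<Rightarrow> bool" where
  "has_grad f g \<longleftrightarrow> (\<forall>x. (f has_derivative (\<lambda>h. g x \<bullet> h)) (at x))"

definition L_smooth :: "real \<Rightarrow> ('a::real_inner \<Rightarrow> real) \<Rightarrow> ('a \<Rightarrow> 'a) \<Rightarrow> bool" where
  "L_smooth L f g \<longleftrightarrow> has_grad f g \<and> (\<forall>x y. norm (g x - g y) \<le> L * norm (x - y))"

definition strongly_convex :: "real \<Rightarrow> ('a::real_inner \<Rightarrow> real) \<Rightarrow> bool" where
  "strongly_convex mu f \<longleftrightarrow> convex_on UNIV (\<lambda>x. f x - mu / 2 * (norm x)\<^sup>2)"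

text \<open>Inner loop of epoch s, started from x_s^0 = omega, with stored vector v = v_s.
  ps s t is the index pi_s^t.\<close>
fun nfg_x :: "nat \<Rightarrow> (nat \<Rightarrow> 'a::real_vector \<Rightarrow> 'a) \<Rightarrow> (nat \<Rightarrow> nat \<Rightarrow> nat) \<Rightarrow> real
              \<Rightarrow> nat \<Rightarrow> 'a \<Rightarrow> 'a \<Rightarrow> nat \<Rightarrow> 'a" where
  "nfg_x n g \<pi> \<gamma> s \<omega> v 0 = \<omega>"
| "nfg_x n g \<pi> \<gamma> s \<omega> v (Suc t) =
     (let x = nfg_x n g \<pi> \<gamma> s \<omega> v t in
        x - \<gamma> *\<^sub>R (g (\<pi> s t) x - g (\<pi> s t) \<omega> + v))"

definition nfg_v :: "nat \<Rightarrow> (nat \<Rightarrow> 'a::real_vector \<Rightarrow> 'a) \<Rightarrow> (nat \<Rightarrow> nat \<Rightarrow> nat) \<Rightarrow> real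
              \<Rightarrow> nat \<Rightarrow> 'a \<Rightarrow> 'a \<Rightarrow> nat \<Rightarrow> 'a" where
  "nfg_v n g \<pi> \<gamma> s \<omega> v t =
     g (\<pi> s t) (nfg_x n g \<pi> \<gamma> s \<omega> v t) - g (\<pi> s t) \<omega> + v"

fun nfg_vt :: "nat \<Rightarrow> (nat \<Rightarrow> 'a::real_vector \<Rightarrow> 'a) \<Rightarrow> (nat \<Rightarrow> nat \<Rightarrow> nat) \<Rightarrow> real
              \<Rightarrow> nat \<Rightarrow> 'a \<Rightarrow> 'a \<Rightarrow> nat \<Rightarrow> 'a" where
  "nfg_vt n g \<pi> \<gamma> s \<omega> v 0 = 0"
| "nfg_vt n g \<pi> \<gamma> s \<omega> v (Suc t) =
     (real t / real (t + 1)) *\<^sub>R nfg_vt n g \<pi> \<gamma> s \<omega> v t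
     + (1 / real (t + 1)) *\<^sub>R g (\<pi> s t) (nfg_x n g \<pi> \<gamma> s \<omega> v t)"

fun nfg_epoch :: "nat \<Rightarrow> (nat \<Rightarrow> 'a::real_vector \<Rightarrow> 'a) \<Rightarrow> (nat \<Rightarrow> nat \<Rightarrow> nat) \<Rightarrow> real
              \<Rightarrow> 'a \<Rightarrow> nat \<Rightarrow> 'a \<times> 'a" where
  "nfg_epoch n g \<pi> \<gamma> x0 0 = (x0, 0)"
| "nfg_epoch n g \<pi> \<gamma> x0 (Suc s) =
     (let (\<omega>, v) = nfg_epoch n g \<pi> \<gamma> x0 s in
       (nfg_x n g \<pi> \<gamma> s \<omega> v n, nfg_vt n g \<pi> \<gamma> s \<omega> v n))"

definition nfg_omega where "nfg_omega n g \<pi> \<gamma> x0 s = fst (nfg_epoch n g \<pi> \<gamma> x0 s)"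
definition nfg_vs where "nfg_vs n g \<pi> \<gamma> x0 s = snd (nfg_epoch n g \<pi> \<gamma> x0 s)"

definition nfg_iter_x where
  "nfg_iter_x n g \<pi> \<gamma> x0 s t =
     nfg_x n g \<pi> \<gamma> s (nfg_omega n g \<pi> \<gamma> x0 s) (nfg_vs n g \<pi> \<gamma> x0 s) t"
definition nfg_iter_v where
  "nfg_iter_v n g \<pi> \<gamma> x0 s t =
     nfg_v n g \<pi> \<gamma> s (nfg_omega n g \<pi> \<gamma> x0 s) (nfg_vs n g \<pi> \<gamma> x0 s) t"

end

theory Submission
  imports Defs
begin

lemma avg_bound:
  fixes d :: "nat \<Rightarrow> 'a::real_normed_vector" and r :: "nat \<Rightarrow> real"
  assumes n: "n \<ge> 1" and dr: "\<And>t. t < n \<Longrightarrow> norm (d t) \<le> r t"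
  shows "(norm ((1 / real n) *\<^sub>R (\<Sum>t<n. d t)))\<^sup>2 \<le> (1 / real n) * (\<Sum>t<n. (r t)\<^sup>2)"
proof -
  have r0: "\<And>t. t < n \<Longrightarrow> 0 \<le> r t" using dr norm_ge_zero order_trans by blast
  have "norm ((1 / real n) *\<^sub>R (\<Sum>t<n. d t)) = (1 / real n) * norm (\<Sum>t<n. d t)"
    by simp
  also have "\<dots> \<le> (1 / real n) * (\<Sum>t<n. r t)"
    by (intro mult_left_mono order_trans[OF norm_sum sum_mono]) (auto simp: dr)
  finally have h: "norm ((1 / real n) *\<^sub>R (\<Sum>t<n. d t)) \<le> (1 / real n) * (\<Sum>t<n. r t)" .
  have "(norm ((1 / real n) *\<^sub>R (\<Sum>t<n. d t)))\<^sup>2 \<le> ((1 / real n) * (\<Sum>t<n. r t))\<^sup>2"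
    by (rule power_mono[OF h norm_ge_zero])
  also have "\<dots> = (1 / real n)\<^sup>2 * (\<Sum>t<n. r t)\<^sup>2" by (rule power_mult_distrib)
  also have "\<dots> \<le> (1 / real n)\<^sup>2 * ((\<Sum>t<n. (r t)\<^sup>2) * real n)"
    using sum_squared_le_sum_of_squares[of r "{..<n}"] by (intro mult_left_mono) auto
  also have "\<dots> = (1 / real n) * (\<Sum>t<n. (r t)\<^sup>2)" using n
    by (simp add: power2_eq_square field_simps)
  finally show ?thesis .
qed

lemma sq_sub_le: "(norm ((a::'a::real_normed_vector) - b))\<^sup>2 \<le> 2 * (norm a)\<^sup>2 + 2 * (norm b)\<^sup>2"
proof -
  have "(norm (a - b))\<^sup>2 \<le> (norm a + norm b)\<^sup>2"
    by (intro power_mono norm_triangle_ineq4) auto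
  also have "\<dots> \<le> 2 * (norm a)\<^sup>2 + 2 * (norm b)\<^sup>2"
    using sum_squares_ge_zero[of "norm a - norm b" 0]
    by (simp add: power2_eq_square algebra_simps)
  finally show ?thesis .
qed

theorem lemma1:
  fixes n :: nat and L \<gamma> :: real
    and f :: "nat \<Rightarrow> real ^ 'd \<Rightarrow> real" and g :: "nat \<Rightarrow> real ^ 'd \<Rightarrow> real ^ 'd"
    and F :: "real ^ 'd \<Rightarrow> real" and gradF :: "real ^ 'd \<Rightarrow> real ^ 'd"
    and \<pi> :: "nat \<Rightarrow> nat \<Rightarrow> nat" and x0 :: "real ^ 'd" and s :: nat
  assumes n: "n \<ge> 1"
    and gamma: "\<gamma> > 0"
    and smooth: "\<And>i. i < n \<Longrightarrow> L_smooth L (f i) (g i)"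
    and F_def: "F = (\<lambda>x. (1 / real n) * (\<Sum>i<n. f i x))"
    and gradF: "has_grad F gradF"
    and extra: "(\<exists>\<mu>>0. \<forall>i<n. strongly_convex \<mu> (f i)) \<or> bdd_below (range F)"
    and perm: "\<And>s. bij_betw (\<pi> s) {..<n} {..<n}"
  shows "(norm (gradF (nfg_omega n g \<pi> \<gamma> x0 s)
            - (1 / real n) *\<^sub>R (\<Sum>t<n. nfg_iter_v n g \<pi> \<gamma> x0 s t)))\<^sup>2
         \<le> 2 * (norm (gradF (nfg_omega n g \<pi> \<gamma> x0 s) - nfg_vs n g \<pi> \<gamma> x0 s))\<^sup>2
           + 2 * L\<^sup>2 / real n *
             (\<Sum>t<n. (norm (nfg_iter_x n g \<pi> \<gamma> x0 s t - nfg_omega n g \<pi> \<gamma> x0 s))\<^sup>2)"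
proof -
  define w where "w = nfg_omega n g \<pi> \<gamma> x0 s"
  define v where "v = nfg_vs n g \<pi> \<gamma> x0 s"
  define x where "x = nfg_iter_x n g \<pi> \<gamma> x0 s"
  define d where "d = (\<lambda>t. g (\<pi> s t) (x t) - g (\<pi> s t) w)"
  have iv: "nfg_iter_v n g \<pi> \<gamma> x0 s t = d t + v" for t
    unfolding nfg_iter_v_def nfg_v_def d_def x_def w_def v_def nfg_iter_x_def by simp
  have avg: "(1 / real n) *\<^sub>R (\<Sum>t<n. nfg_iter_v n g \<pi> \<gamma> x0 s t)
      = v + (1 / real n) *\<^sub>R (\<Sum>t<n. d t)"
    using n by (simp add: iv sum.distrib scaleR_add_right sum_constant_scaleR del: sum_constant)
  have dr: "norm (d t) \<le> \<bar>L\<bar> * norm (x t - w)" if "t < n" for t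
  proof -
    have "\<pi> s t < n" using perm[of s] that by (auto simp: bij_betw_def)
    then have "norm (d t) \<le> L * norm (x t - w)"
      using smooth unfolding L_smooth_def d_def by blast
    also have "\<dots> \<le> \<bar>L\<bar> * norm (x t - w)" by (intro mult_right_mono) auto
    finally show ?thesis .
  qed
  have b: "(norm ((1 / real n) *\<^sub>R (\<Sum>t<n. d t)))\<^sup>2
      \<le> (1 / real n) * (\<Sum>t<n. (\<bar>L\<bar> * norm (x t - w))\<^sup>2)"
    by (rule avg_bound[OF n dr])
  have e: "(1 / real n) * (\<Sum>t<n. (\<bar>L\<bar> * norm (x t - w))\<^sup>2)
      = L\<^sup>2 / real n * (\<Sum>t<n. (norm (x t - w))\<^sup>2)"
    by (simp add: power_mult_distrib sum_distrib_left)
  have "gradF w - (v + (1 / real n) *\<^sub>R (\<Sum>t<n. d t))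
      = (gradF w - v) - (1 / real n) *\<^sub>R (\<Sum>t<n. d t)" by simp
  then have "(norm (gradF w - (v + (1 / real n) *\<^sub>R (\<Sum>t<n. d t))))\<^sup>2
      \<le> 2 * (norm (gradF w - v))\<^sup>2 + 2 * (norm ((1 / real n) *\<^sub>R (\<Sum>t<n. d t)))\<^sup>2"
    using sq_sub_le by metis
  also have "\<dots> \<le> 2 * (norm (gradF w - v))\<^sup>2 + 2 * (L\<^sup>2 / real n * (\<Sum>t<n. (norm (x t - w))\<^sup>2))"
    using b e by linarith
  finally show ?thesis unfolding avg by (simp add: w_def v_def x_def)
qed

end
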